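(* Let $\vec{\Phi}_1,\vec{\Phi}_2\in\mathbb{R}^2$ be unit vectors with $\vec{\Phi}_1\cdot\vec{\Phi}_2=1/2$, let $\vec{\phi}_1=-(\vec{\Phi}_1+\vec{\Phi}_2)/3$, and let $\mathbb{E}_1=\{n\vec{\Phi}_1+m\vec{\Phi}_2+\vec{\phi}_1 \mid n,m\in\mathbb{Z}\}$. For $\vec{\lambda}\in\mathbb{R}^2$ put $N(\vec{\lambda})=\vec{\lambda}\cdot\vec{\lambda}$. Let $L>0$. Then there are exactly $3$ distinct vectors $\vec{\lambda}\in\mathbb{E}_1$ with $\sqrt{N(\vec{\lambda})}=L$ if and only if $L=3^{-1/2}\prod_j m_j^{\mu_j}$, a finite product with exponents $\mu_j\in\mathbb{N}$ and primes $m_j\equiv 2\pmod{3}$.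
   Context: $\mathbb{E}_1$ is the triangular lattice spanned by $\vec{\Phi}_1,\vec{\Phi}_2$ (angle $60^\circ$) translated by $\vec{\phi}_1$; $N$ is the squared Euclidean norm. *)

theory Defs
  imports "HOL-Analysis.Analysis" "HOL-Library.Multiset" "HOL-Computational_Algebra.Primes"
begin

definition lattice_E1 :: "real^2 \<Rightarrow> real^2 \<Rightarrow> (real^2) set" where
  "lattice_E1 \<Phi>1 \<Phi>2 =
     {of_int n *\<^sub>R \<Phi>1 + of_int m *\<^sub>R \<Phi>2 - (1/3) *\<^sub>R (\<Phi>1 + \<Phi>2) | n m :: int. True}"

definition normN :: "real^2 \<Rightarrow> real" where
  "normN v = v \<bullet> v"

end

theory Submission
  imports Defs "HOL-Number_Theory.Number_Theory"
begin

definition QF :: "int \<Rightarrow> int \<Rightarrow> int" where "QF x y = x^2 + x*y + y^2"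

lemma Q4: "4 * QF x y = (2*x+y)^2 + 3*y^2"
  by (simp add: QF_def power2_eq_square algebra_simps)

lemma Q_nonneg: "QF x y \<ge> 0"
proof -
  have "4 * QF x y \<ge> 0" unfolding Q4 by simp
  thus ?thesis by simp
qed

lemma Q_pos: assumes "x \<noteq> 0 \<or> y \<noteq> 0" shows "QF x y > 0"
proof (cases "y = 0")
  case True
  then show ?thesis using assms by (simp add: QF_def)
next
  case False
  have "4 * QF x y > 0" unfolding Q4 using False
    by (simp add: add_nonneg_pos)
  thus ?thesis by simp
qed

lemma Q_even: assumes "even (QF x y)" shows "even x \<and> even y"
  using assms by (cases "even x"; cases "even y") (auto simp: QF_def power2_eq_square)

lemma Q_mult: "QF x1 y1 * QF x2 y2 = QF (x1*x2 - y1*y2) (x1*y2 + x2*y1 + y1*y2)"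
  unfolding QF_def power2_eq_square by (simp add: algebra_simps)

lemma fermat_int:
  assumes "prime (p::nat)" "\<not> int p dvd a"
  shows "[a^(p-1) = 1] (mod int p)"
proof -
  have pp: "int p > 0" using prime_gt_0_nat assms by simp
  define b where "b = nat (a mod int p)"
  have bi: "int b = a mod int p" using pp by (simp add: b_def)
  have "\<not> p dvd b"
  proof
    assume "p dvd b"
    hence "int p dvd int b" by simp
    hence "int p dvd a mod int p" using bi by simp
    thus False using assms(2) by (simp add: dvd_mod_iff)
  qed
  then have "[b^(p-1) = 1] (mod p)" by (rule fermat_theorem[OF assms(1)])
  hence c1: "[int b^(p-1) = 1] (mod int p)" using cong_int_iff by (metis of_nat_1 of_nat_power)
  have "[int b = a] (mod int p)" by (simp add: bi cong_def)
  hence "[int b^(p-1) = a^(p-1)] (mod int p)" by (rule cong_pow)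
  thus ?thesis using c1 by (meson cong_sym cong_trans)
qed

lemma key_A:
  assumes p: "prime (p::nat)" "p mod 3 = 2" and d: "int p dvd QF x y"
  shows "int p dvd x \<and> int p dvd y"
proof (rule ccontr)
  assume nd: "\<not> (int p dvd x \<and> int p dvd y)"
  have pi: "prime (int p)" using p by simp
  have ny: "\<not> int p dvd y"
  proof
    assume "int p dvd y"
    have "x^2 = QF x y - y * (x + y)" by (simp add: QF_def power2_eq_square algebra_simps)
    then have "int p dvd x^2" using d \<open>int p dvd y\<close> by (simp add: dvd_diff)
    then have "int p dvd x" using pi prime_dvd_power by blast
    thus False using nd \<open>int p dvd y\<close> by blast
  qed
  have nx: "\<not> int p dvd x"
  proof
    assume "int p dvd x"
    have "y^2 = QF x y - x * (x + y)" by (simp add: QF_def power2_eq_square algebra_simps)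
    then have "int p dvd y^2" using d \<open>int p dvd x\<close> by (simp add: dvd_diff)
    then have "int p dvd y" using pi prime_dvd_power by blast
    thus False using ny by blast
  qed
  have "x^3 - y^3 = (x - y) * QF x y" by (simp add: QF_def power2_eq_square power3_eq_cube algebra_simps)
  hence c3: "[x^3 = y^3] (mod int p)" using d by (simp add: cong_iff_dvd_diff)
  define k where "k = p div 3"
  have k: "p - 1 = 3*k + 1" using p(2) unfolding k_def by presburger
  have ex: "x^(p-1) = (x^3)^k * x" for x :: int
  proof -
    have "x^(p-1) = x^(3*k+1)" using k by metis
    also have "\<dots> = (x^3)^k * x" by (simp add: power_mult power_add)
    finally show ?thesis .
  qed
  have fx: "[(x^3)^k * x = 1] (mod int p)" using fermat_int[OF p(1) nx] ex by simp
  have fy: "[(y^3)^k * y = 1] (mod int p)" using fermat_int[OF p(1) ny] ex by simp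
  have "[(x^3)^k * x = (y^3)^k * x] (mod int p)" by (intro cong_mult cong_pow c3 cong_refl)
  hence "[(y^3)^k * x = (y^3)^k * y] (mod int p)" using fx fy by (meson cong_sym cong_trans)
  moreover have "coprime ((y^3)^k) (int p)"
  proof -
    have "coprime (int p) y" using ny pi prime_imp_coprime by blast
    thus ?thesis by (simp add: coprime_commute)
  qed
  ultimately have cxy: "[x = y] (mod int p)" using cong_mult_lcancel by blast
  have "QF x y - 3 * y^2 = (x - y) * (x + 2*y)" by (simp add: QF_def power2_eq_square algebra_simps)
  hence "int p dvd QF x y - 3 * y^2" using cxy by (simp add: cong_iff_dvd_diff)
  hence "int p dvd QF x y - (QF x y - 3 * y^2)" using d by (rule dvd_diff[rotated])
  hence "int p dvd 3 * y^2" by simp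
  hence "int p dvd 3 \<or> int p dvd y^2" using pi prime_dvd_mult_iff by blast
  moreover have "\<not> int p dvd y^2" using ny pi prime_dvd_power by blast
  ultimately have "int p dvd 3" by blast
  hence "p dvd 3" by presburger
  hence "p \<le> 3" by (simp add: dvd_imp_le)
  hence "p = 2" using p(2) by presburger
  thus False using \<open>p dvd 3\<close> by simp
qed

lemma order3_exists:
  assumes p: "prime (p::nat)" "p mod 3 = 1"
  shows "\<exists>w::int. int p dvd (w^2 + w + 1)"
proof -
  have p1: "p > 1" using p prime_gt_1_nat by blast
  have "3 dvd p - 1" using p(2) p1 by presburger
  then have "card {x \<in> totatives p. ord p x = 3} = totient 3"
    using prime_card_elements_with_ord_eq_totient[OF p1 p(1), of 3] by simp
  also have "totient 3 = 2" using totient_prime[of 3] by simp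
  finally have "{x \<in> totatives p. ord p x = 3} \<noteq> {}" by (metis card.empty zero_neq_numeral)
  then obtain x where x: "ord p x = 3" by blast
  have "[x^3 = 1] (mod p)" using ord_divides[of x 3 p] x by simp
  hence "[int x^3 = 1] (mod int p)" using cong_int_iff by (metis of_nat_1 of_nat_power)
  hence d1: "int p dvd (int x - 1) * (int x^2 + int x + 1)"
    by (simp add: cong_iff_dvd_diff power2_eq_square power3_eq_cube algebra_simps)
  have "\<not> [x = 1] (mod p)" using x ord_eq_Suc_0_iff[of p x] by simp
  hence "\<not> [int x = 1] (mod int p)" using cong_int_iff by (metis of_nat_1)
  hence "\<not> int p dvd (int x - 1)" by (simp add: cong_iff_dvd_diff)
  moreover have "prime (int p)" using p by simp
  ultimately have "int p dvd (int x^2 + int x + 1)" using d1 prime_dvd_mult_iff by blast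
  thus ?thesis by blast
qed

lemma prime_not_square: assumes "prime (p::nat)" shows "m^2 \<noteq> p"
proof
  assume h: "m^2 = p"
  hence "m dvd p" by (metis dvd_triv_left power2_eq_square)
  hence "m = 1 \<or> m = p" using assms prime_nat_iff by blast
  thus False using h assms prime_gt_1_nat[OF assms]
    by (auto simp: power2_eq_square)
qed

lemma rep_prime:
  assumes p: "prime (p::nat)" "p mod 3 = 1"
  shows "\<exists>c d. QF c d = int p"
proof -
  obtain w where w: "int p dvd w^2 + w + 1" using order3_exists[OF p] by blast
  have p1: "p > 1" using p prime_gt_1_nat by blast
  define m where "m = nat \<lfloor>sqrt (real p)\<rfloor>"
  have "real m \<le> sqrt (real p)" unfolding m_def by simp
  hence "real m ^ 2 \<le> real p" by (metis of_nat_0_le_iff power_mono real_sqrt_pow2 of_nat_0_le_iff)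
  hence "m^2 \<le> p" by (metis of_nat_le_iff of_nat_power)
  hence m1: "m^2 < p" using prime_not_square[OF p(1), of m] by linarith
  have "sqrt (real p) < real m + 1" unfolding m_def by linarith
  hence "real p < (real m + 1)^2"
    by (metis of_nat_0_le_iff real_sqrt_pow2 power_strict_mono real_sqrt_ge_zero zero_less_numeral)
  hence m2: "p < (m+1)^2" by (metis of_nat_1 of_nat_add of_nat_less_iff of_nat_power)
  define A where "A = {0..m} \<times> {0..m}"
  define f where "f = (\<lambda>(u::nat, v::nat). (int u - w * int v) mod int p)"
  have cA: "card A = (m+1)^2" unfolding A_def by (simp add: power2_eq_square)
  have fA: "f ` A \<subseteq> {0..<int p}" unfolding f_def using p1 by auto
  have "\<not> inj_on f A"
  proof
    assume "inj_on f A"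
    hence "card A \<le> card {0..<int p}" using card_inj_on_le[OF _ fA] by simp
    thus False using cA m2 by simp
  qed
  then obtain u1 v1 u2 v2 where uv: "(u1,v1) \<in> A" "(u2,v2) \<in> A" "(u1,v1) \<noteq> (u2,v2)"
    "f (u1,v1) = f (u2,v2)" unfolding inj_on_def by auto
  define x where "x = int u1 - int u2"
  define y where "y = int v1 - int v2"
  have nz: "x \<noteq> 0 \<or> y \<noteq> 0" using uv(3) unfolding x_def y_def by auto
  have bx: "\<bar>x\<bar> \<le> int m" "\<bar>y\<bar> \<le> int m" using uv(1,2) unfolding x_def y_def A_def by auto
  have "(int u1 - w * int v1) mod int p = (int u2 - w * int v2) mod int p" using uv(4) unfolding f_def by simp
  hence "int p dvd (int u1 - w * int v1) - (int u2 - w * int v2)" by (simp add: mod_eq_dvd_iff)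
  moreover have "(int u1 - w * int v1) - (int u2 - w * int v2) = x - w * y"
    unfolding x_def y_def by (simp add: algebra_simps)
  ultimately have dxy: "int p dvd x - w * y" by simp
  have "QF x y = (x - w*y) * (x + w*y + y) + y^2 * (w^2 + w + 1)"
    by (simp add: QF_def power2_eq_square algebra_simps)
  hence dQ: "int p dvd QF x y" using dxy w by simp
  then obtain j where j: "QF x y = int p * j" by blast
  have "x^2 \<le> int m ^2" using bx by (metis abs_le_square_iff abs_of_nat)
  moreover have "y^2 \<le> int m ^2" using bx by (metis abs_le_square_iff abs_of_nat)
  moreover have "x*y \<le> int m ^ 2"
  proof -
    have "x*y \<le> \<bar>x\<bar> * \<bar>y\<bar>" by (metis abs_ge_self abs_mult)
    also have "\<dots> \<le> int m * int m" using bx by (simp add: mult_mono)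
    finally show ?thesis by (simp add: power2_eq_square)
  qed
  ultimately have "QF x y \<le> 3 * int m ^ 2" unfolding QF_def by simp
  also have "\<dots> < 3 * int p" using m1 by (metis of_nat_less_iff of_nat_power mult_strict_left_mono zero_less_numeral)
  finally have "int p * j < int p * 3" using j by simp
  hence j3: "j < 3" using p1 by simp
  have "int p * j > 0" using Q_pos[OF nz] j by simp
  hence j0: "j > 0" using p1 by (simp add: zero_less_mult_iff)
  have "j \<noteq> 2"
  proof
    assume "j = 2"
    hence "even (QF x y)" using j by simp
    hence "even x \<and> even y" by (rule Q_even)
    then obtain a b where "x = 2*a" "y = 2*b" by blast
    hence "QF x y = 4 * QF a b" by (simp add: QF_def power2_eq_square algebra_simps)
    hence "4 * QF a b = int p * 2" using j \<open>j = 2\<close> by simp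
    hence "int p = 2 * QF a b" by simp
    hence "even p" by presburger
    have "p = 2"
    proof (rule ccontr)
      assume "p \<noteq> 2"
      hence "p > 2" using p1 by simp
      hence "odd p" by (rule prime_odd_nat[OF p(1)])
      thus False using \<open>even p\<close> by simp
    qed
    thus False using p(2) by simp
  qed
  hence "j = 1" using j0 j3 by simp
  thus ?thesis using j by auto
qed

definition vecE :: "real^2 \<Rightarrow> real^2 \<Rightarrow> int \<Rightarrow> int \<Rightarrow> real^2" where
  "vecE P1 P2 a b = (of_int a / 3) *\<^sub>R P1 + (of_int b / 3) *\<^sub>R P2"

lemma lattice_vecE:
  "lattice_E1 P1 P2 = {vecE P1 P2 a b | a b. a mod 3 = 2 \<and> b mod 3 = 2}"
proof (rule equalityI; rule subsetI)
  fix v assume "v \<in> lattice_E1 P1 P2"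
  then obtain n m :: int where v: "v = of_int n *\<^sub>R P1 + of_int m *\<^sub>R P2 - (1/3) *\<^sub>R (P1 + P2)"
    unfolding lattice_E1_def by blast
  have "v = vecE P1 P2 (3*n-1) (3*m-1)"
    unfolding v vecE_def by (simp add: algebra_simps scaleR_add_right diff_divide_distrib)
  moreover have "(3*n-1) mod 3 = 2" "(3*m-1) mod 3 = 2" by presburger+
  ultimately show "v \<in> {vecE P1 P2 a b | a b. a mod 3 = 2 \<and> b mod 3 = 2}" by blast
next
  fix v assume "v \<in> {vecE P1 P2 a b | a b. a mod 3 = 2 \<and> b mod 3 = 2}"
  then obtain a b where v: "v = vecE P1 P2 a b" and ab: "a mod 3 = 2" "b mod 3 = 2" by blast
  define n where "n = (a+1) div 3"
  define m where "m = (b+1) div 3"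
  have a: "a = 3*n - 1" using ab unfolding n_def by presburger
  have b: "b = 3*m - 1" using ab unfolding m_def by presburger
  have "v = of_int n *\<^sub>R P1 + of_int m *\<^sub>R P2 - (1/3) *\<^sub>R (P1 + P2)"
    unfolding v vecE_def a b by (simp add: algebra_simps scaleR_add_right diff_divide_distrib)
  thus "v \<in> lattice_E1 P1 P2" unfolding lattice_E1_def by blast
qed

definition TS :: "int \<Rightarrow> (int \<times> int) set" where
  "TS K = {(a,b). a mod 3 = 2 \<and> b mod 3 = 2 \<and> QF a b = K}"

context
  fixes P1 P2 :: "real^2"
  assumes n1: "norm P1 = 1" and n2: "norm P2 = 1" and ip: "P1 \<bullet> P2 = 1/2"
begin

lemma ii: "P1 \<bullet> P1 = 1" "P2 \<bullet> P2 = 1" "P2 \<bullet> P1 = 1/2"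
  using n1 n2 ip power2_norm_eq_inner[of P1] power2_norm_eq_inner[of P2]
  by (auto simp: inner_commute)

lemma normN_vecE: "normN (vecE P1 P2 a b) = real_of_int (QF a b) / 9"
  unfolding normN_def vecE_def QF_def
  by (simp add: inner_add_left inner_add_right ii ip power2_eq_square field_simps)

lemma vecE_inj: assumes "vecE P1 P2 a b = vecE P1 P2 c d" shows "a = c \<and> b = d"
proof -
  have e1: "vecE P1 P2 a b \<bullet> P1 = vecE P1 P2 c d \<bullet> P1" using assms by simp
  have e2: "vecE P1 P2 a b \<bullet> P2 = vecE P1 P2 c d \<bullet> P2" using assms by simp
  have i1: "vecE P1 P2 x y \<bullet> P1 = real_of_int x / 3 + real_of_int y / 6" for x y
    unfolding vecE_def by (simp add: inner_add_left ii)
  have i2: "vecE P1 P2 x y \<bullet> P2 = real_of_int x / 6 + real_of_int y / 3" for x y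
    unfolding vecE_def by (simp add: inner_add_left ii ip)
  from e1 e2 have "real_of_int a = real_of_int c \<and> real_of_int b = real_of_int d"
    unfolding i1 i2 by linarith
  thus ?thesis by simp
qed

lemma S_eq:
  assumes "L > 0" "9 * L^2 = real_of_int K"
  shows "{v \<in> lattice_E1 P1 P2. sqrt (normN v) = L} = (\<lambda>(a,b). vecE P1 P2 a b) ` TS K"
proof -
  have eq: "sqrt (normN (vecE P1 P2 a b)) = L \<longleftrightarrow> QF a b = K" for a b
  proof -
    have "sqrt (normN (vecE P1 P2 a b)) = L \<longleftrightarrow> normN (vecE P1 P2 a b) = L^2"
      using assms(1) Q_nonneg[of a b] normN_vecE by (auto simp: real_sqrt_unique)
    also have "\<dots> \<longleftrightarrow> real_of_int (QF a b) = 9 * L^2" using normN_vecE[of a b] by auto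
    also have "\<dots> \<longleftrightarrow> real_of_int (QF a b) = real_of_int K" using assms(2) by simp
    finally show ?thesis by simp
  qed
  show ?thesis unfolding lattice_vecE TS_def using eq by auto
qed

lemma card_S:
  assumes "L > 0" "9 * L^2 = real_of_int K"
  shows "card {v \<in> lattice_E1 P1 P2. sqrt (normN v) = L} = card (TS K)"
  unfolding S_eq[OF assms]
  by (rule card_image) (auto simp: inj_on_def dest: vecE_inj)

end

lemma four:
  assumes "(a,b) \<in> TS K" "a \<noteq> b" "a \<noteq> -2*b" "b \<noteq> -2*a"
  shows "card (TS K) \<noteq> 3"
proof -
  from assms have ab: "a mod 3 = 2" "b mod 3 = 2" "QF a b = K" by (auto simp: TS_def)
  have Qs: "QF (-a-b) a = QF a b" "QF b (-a-b) = QF a b" "QF b a = QF a b"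
    by (simp_all add: QF_def power2_eq_square algebra_simps)
  have m: "(-a-b) mod 3 = 2" using ab by presburger
  let ?F = "{(a,b), (-a-b,a), (b,-a-b), (b,a)}"
  have sub: "?F \<subseteq> TS K" using ab Qs m by (auto simp: TS_def)
  have c4: "card ?F = 4" using assms(2-4) by auto
  show ?thesis
  proof (cases "finite (TS K)")
    case True then have "4 \<le> card (TS K)" using card_mono[OF True sub] c4 by simp
    thus ?thesis by simp
  next
    case False thus ?thesis by simp
  qed
qed

lemma on_line:
  assumes "(a,b) \<in> TS K" "\<not> (a \<noteq> b \<and> a \<noteq> -2*b \<and> b \<noteq> -2*a)"
  shows "\<exists>t. t mod 3 = 2 \<and> K = 3*t^2"
proof -
  from assms have ab: "a mod 3 = 2" "b mod 3 = 2" "QF a b = K" by (auto simp: TS_def)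
  from assms(2) consider "a = b" | "a = -2*b" | "b = -2*a" by blast
  thus ?thesis
  proof cases
    case 1 thus ?thesis using ab by (intro exI[of _ b]) (simp add: QF_def power2_eq_square)
  next
    case 2 thus ?thesis using ab by (intro exI[of _ b]) (simp add: QF_def power2_eq_square)
  next
    case 3 thus ?thesis using ab by (intro exI[of _ a]) (simp add: QF_def power2_eq_square)
  qed
qed

lemma goodify:
  assumes "QF a b = 3*t^2" "t mod 3 \<noteq> 0"
  shows "(a mod 3 = 2 \<and> b mod 3 = 2) \<or> ((-a) mod 3 = 2 \<and> (-b) mod 3 = 2)"
proof -
  have p3: "prime (3::int)" by simp
  have "(a-b)^2 = 3 * (t^2 - a*b)" using assms(1) by (simp add: QF_def power2_eq_square algebra_simps)
  hence "3 dvd (a-b)^2" by simp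
  hence d: "3 dvd a - b" using p3 prime_dvd_power by blast
  have na: "\<not> 3 dvd a"
  proof
    assume "3 dvd a"
    then obtain a' where a': "a = 3*a'" by blast
    from d \<open>3 dvd a\<close> have "3 dvd b" by presburger
    then obtain b' where b': "b = 3*b'" by blast
    have "QF a b = 9 * QF a' b'" unfolding a' b' by (simp add: QF_def power2_eq_square algebra_simps)
    hence "t^2 = 3 * QF a' b'" using assms(1) by simp
    hence "3 dvd t^2" by simp
    hence "3 dvd t" using p3 prime_dvd_power by blast
    thus False using assms(2) by presburger
  qed
  show ?thesis using na d by presburger
qed

lemma prime_sq:
  assumes "prime (p::nat)" "p mod 3 = 1"
  shows "int p \<noteq> z^2" "int p \<noteq> 3*z^2"
proof
  assume "int p = z^2"
  hence "int p = int (nat \<bar>z\<bar> ^ 2)" by simp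
  hence "p = (nat \<bar>z\<bar>)^2" by linarith
  thus False using prime_not_square[OF assms(1)] by metis
next
  show "int p \<noteq> 3*z^2"
  proof
    assume "int p = 3*z^2"
    hence "int p mod 3 = 0" by simp
    thus False using assms(2) by presburger
  qed
qed

lemma off_exists:
  assumes p: "prime (p::nat)" "p mod 3 = 1" and dt: "int p dvd t" and t3: "t mod 3 = 2"
  shows "\<exists>a b. (a,b) \<in> TS (3*t^2) \<and> a \<noteq> b \<and> a \<noteq> -2*b \<and> b \<noteq> -2*a"
proof -
  obtain c d where cd: "QF c d = int p" using rep_prime[OF p] by blast
  obtain r where r: "t = int p * r" using dt by blast
  have r0: "r \<noteq> 0" using r t3 by auto
  define u where "u = c^2 - d^2"
  define v where "v = 2*c*d + d^2"
  define ea where "ea = r * (u - v)"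
  define eb where "eb = r * (u + 2 * v)"
  have Quv: "QF u v = QF c d * QF c d" unfolding u_def v_def using Q_mult[of c d c d]
    by (simp add: power2_eq_square mult.assoc)
  have "QF ea eb = r^2 * (3 * QF u v)" unfolding ea_def eb_def
    by (simp add: QF_def power2_eq_square algebra_simps)
  also have "\<dots> = 3*t^2" unfolding Quv cd r by (simp add: power2_eq_square)
  finally have Q0: "QF ea eb = 3*t^2" .
  have ps: "\<And>z. QF c d \<noteq> z^2" "\<And>z. QF c d \<noteq> 3*z^2" using prime_sq[OF p] cd by auto
  have v0: "v \<noteq> 0"
  proof
    assume "v = 0"
    hence "d * (2*c + d) = 0" unfolding v_def by (simp add: power2_eq_square algebra_simps)
    hence "d = 0 \<or> d = -2*c" by auto
    thus False using ps[of c] by (auto simp: QF_def power2_eq_square)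
  qed
  have u0: "u \<noteq> 0"
  proof
    assume "u = 0"
    hence "(c - d) * (c + d) = 0" unfolding u_def by (simp add: power2_eq_square algebra_simps)
    hence "c = d \<or> c = -d" by auto
    thus False using ps[of c] ps[of d] by (auto simp: QF_def power2_eq_square)
  qed
  have uv0: "u \<noteq> -v"
  proof
    assume "u = -v"
    hence "c * (c + 2*d) = 0" unfolding u_def v_def by (simp add: power2_eq_square algebra_simps)
    hence "c = 0 \<or> c = -2*d" by auto
    thus False using ps[of d] by (auto simp: QF_def power2_eq_square)
  qed
  have off3: "ea \<noteq> -2*eb"
  proof
    assume "ea = -2*eb"
    hence "r * (3*(u+v)) = 0" unfolding ea_def eb_def by (simp add: algebra_simps)
    hence "u + v = 0" using r0 by simp
    thus False using uv0 by simp
  qed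
  have off: "ea \<noteq> eb" "ea \<noteq> -2*eb" "eb \<noteq> -2*ea"
    using r0 v0 u0 off3 unfolding ea_def eb_def by (auto simp: algebra_simps)
  have "t mod 3 \<noteq> 0" using t3 by simp
  from goodify[OF Q0 this] show ?thesis
  proof
    assume "ea mod 3 = 2 \<and> eb mod 3 = 2"
    hence "(ea,eb) \<in> TS (3*t^2)" using Q0 unfolding TS_def by simp
    thus ?thesis using off by blast
  next
    assume g: "(-ea) mod 3 = 2 \<and> (-eb) mod 3 = 2"
    have "QF (-ea) (-eb) = QF ea eb" by (simp add: QF_def power2_eq_square)
    hence "(-ea,-eb) \<in> TS (3*t^2)" using g Q0 unfolding TS_def by simp
    moreover have "-ea \<noteq> -eb" "-ea \<noteq> -2*(-eb)" "-eb \<noteq> -2*(-ea)" using off by linarith+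
    ultimately show ?thesis by blast
  qed
qed

lemma div_lemma:
  assumes "\<forall>p\<in>#M. prime p \<and> p mod 3 = 2" "QF a b = 3 * (int (prod_mset M))^2"
  shows "int (prod_mset M) dvd a \<and> int (prod_mset M) dvd b"
  using assms
proof (induction M arbitrary: a b)
  case empty
  then show ?case by simp
next
  case (add p M)
  have p: "prime p" "p mod 3 = 2" using add.prems(1) by auto
  have "QF a b = int p * (3 * int p * (int (prod_mset M))^2)"
    using add.prems(2) by (simp add: power2_eq_square algebra_simps)
  hence "int p dvd QF a b" by (metis dvd_triv_left)
  from key_A[OF p this] obtain a' b' where ab: "a = int p * a'" "b = int p * b'" by blast
  have "QF a b = (int p)^2 * QF a' b'" unfolding ab by (simp add: QF_def power2_eq_square algebra_simps)
  moreover have "QF a b = (int p)^2 * (3 * (int (prod_mset M))^2)"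
    using add.prems(2) by (simp add: power2_eq_square algebra_simps)
  moreover have "(int p)^2 \<noteq> 0" using p prime_gt_0_nat by simp
  ultimately have "QF a' b' = 3 * (int (prod_mset M))^2" by simp
  with add.IH[of a' b'] add.prems(1) have "int (prod_mset M) dvd a' \<and> int (prod_mset M) dvd b'" by simp
  thus ?case unfolding ab by (simp add: mult_dvd_mono)
qed

lemma Q3:
  assumes "QF x y = 3"
  shows "(x,y) \<in> {(1,1),(-1,-1),(1,-2),(-2,1),(-1,2),(2,-1)}"
proof -
  have "(2*x+y)^2 + 3*y^2 = 12" using Q4[of x y] assms by simp
  hence "y^2 \<le> 4" by (smt (verit) zero_le_power2)
  hence y: "\<bar>y\<bar> \<le> 2" by (metis abs_le_square_iff abs_numeral power2_eq_square numeral_times_numeral semiring_norm(12) semiring_norm(13) num_double)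
  have "(2*y+x)^2 + 3*x^2 = 12" using Q4[of y x] assms by (simp add: QF_def algebra_simps)
  hence "x^2 \<le> 4" by (smt (verit) zero_le_power2)
  hence x: "\<bar>x\<bar> \<le> 2" by (metis abs_le_square_iff abs_numeral power2_eq_square numeral_times_numeral semiring_norm(12) semiring_norm(13) num_double)
  have hx: "x = -2 \<or> x = -1 \<or> x = 0 \<or> x = 1 \<or> x = 2" using x by auto
  have hy: "y = -2 \<or> y = -1 \<or> y = 0 \<or> y = 1 \<or> y = 2" using y by auto
  from hx hy show ?thesis using assms by (elim disjE) (simp_all add: QF_def)
qed

lemma mod3_prod:
  assumes "\<forall>p\<in>#M. p mod 3 = (2::nat)"
  shows "int (prod_mset M) mod 3 = 1 \<or> int (prod_mset M) mod 3 = 2"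
  using assms
proof (induction M)
  case empty
  then show ?case by simp
next
  case (add p M)
  have "int p mod 3 = int (p mod 3)" by (simp add: of_nat_mod)
  hence p: "int p mod 3 = 2" using add.prems by simp
  have ih: "int (prod_mset M) mod 3 = 1 \<or> int (prod_mset M) mod 3 = 2" using add by simp
  have "int (prod_mset (add_mset p M)) = int p * int (prod_mset M)" by simp
  moreover have "(int p * int (prod_mset M)) mod 3 = ((int p mod 3) * (int (prod_mset M) mod 3)) mod 3"
    by (simp add: mod_mult_eq)
  ultimately have "int (prod_mset (add_mset p M)) mod 3 = (2 * (int (prod_mset M) mod 3)) mod 3"
    using p by simp
  thus ?case using ih by auto
qed

lemma three:
  assumes M: "\<forall>p\<in>#M. prime p \<and> p mod 3 = 2"
  shows "card (TS (3 * (int (prod_mset M))^2)) = 3"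
proof -
  define sv where "sv = int (prod_mset M)"
  have s3: "sv mod 3 = 1 \<or> sv mod 3 = 2" using mod3_prod[of M] M unfolding sv_def by auto
  have "prod_mset M > 0" using M by (induction M) (auto simp: prime_gt_0_nat)
  hence s0: "sv > 0" unfolding sv_def by simp
  define g where "g = (if sv mod 3 = 2 then sv else -sv)"
  have g3: "g mod 3 = 2"
  proof (cases "sv mod 3 = 2")
    case True thus ?thesis by (simp add: g_def)
  next
    case False hence "sv mod 3 = 1" using s3 by simp
    hence "(-sv) mod 3 = 2" by presburger
    thus ?thesis using False by (simp add: g_def)
  qed
  have gsq: "g^2 = sv^2" unfolding g_def by simp
  have "TS (3 * sv^2) = {(g,g),(g,-2 * g),(-2 * g,g)}"
  proof (rule equalityI; rule subsetI)
    fix z assume z: "z \<in> TS (3 * sv^2)"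
    then obtain a b where zab: "z = (a,b)" "a mod 3 = 2" "b mod 3 = 2" "QF a b = 3 * sv^2"
      unfolding TS_def by auto
    from div_lemma[OF M] zab(4) have "sv dvd a \<and> sv dvd b" unfolding sv_def by simp
    then obtain a' b' where ab: "a = sv * a'" "b = sv * b'" by blast
    have "QF a b = sv^2 * QF a' b'" unfolding ab by (simp add: QF_def power2_eq_square algebra_simps)
    hence "QF a' b' = 3" using zab(4) s0 by simp
    hence six: "(a',b') \<in> {(1,1),(-1,-1),(1,-2),(-2,1),(-1,2),(2,-1)}" by (rule Q3)
    have mm: "(sv * w) mod 3 = ((sv mod 3) * (w mod 3)) mod 3" for w by (simp add: mod_mult_eq)
    have w3: "w mod 3 = 0 \<or> w mod 3 = 1 \<or> w mod 3 = 2" for w :: int by presburger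
    have zz: "z = (sv * a', sv * b')" using zab(1) unfolding ab by simp
    show "z \<in> {(g,g),(g,-2 * g),(-2 * g,g)}"
    proof (cases "sv mod 3 = 2")
      case True
      have gs: "g = sv" using True by (simp add: g_def)
      have "a' mod 3 = 1" using mm[of a'] w3[of a'] zab(2) True unfolding ab by auto
      moreover have "b' mod 3 = 1" using mm[of b'] w3[of b'] zab(3) True unfolding ab by auto
      ultimately have "(a',b') \<in> {(1,1),(1,-2),(-2,1)}" using six by auto
      thus ?thesis unfolding zz gs by auto
    next
      case False
      hence s1: "sv mod 3 = 1" using s3 by simp
      have gs: "g = - sv" using False by (simp add: g_def)
      have "a' mod 3 = 2" using mm[of a'] w3[of a'] zab(2) s1 unfolding ab by auto
      moreover have "b' mod 3 = 2" using mm[of b'] w3[of b'] zab(3) s1 unfolding ab by auto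
      ultimately have "(a',b') \<in> {(-1,-1),(-1,2),(2,-1)}" using six by auto
      thus ?thesis unfolding zz gs by auto
    qed
  next
    fix z assume zz: "z \<in> {(g,g),(g,-2 * g),(-2 * g,g)}"
    have "QF g g = 3 * g^2" "QF g (-2 * g) = 3 * g^2" "QF (-2 * g) g = 3 * g^2"
      by (simp_all add: QF_def power2_eq_square algebra_simps)
    hence q: "QF g g = 3 * sv^2" "QF g (-2 * g) = 3 * sv^2" "QF (-2 * g) g = 3 * sv^2"
      unfolding gsq by simp_all
    have m2: "(-2 * g) mod 3 = 2" using g3 by presburger
    from zz show "z \<in> TS (3 * sv^2)"
    proof (elim insertE)
      assume "z = (g,g)" thus ?thesis using g3 q unfolding TS_def by simp
    next
      assume "z = (g,-2 * g)" thus ?thesis using g3 m2 q unfolding TS_def by simp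
    next
      assume "z = (-2 * g,g)" thus ?thesis using g3 m2 q unfolding TS_def by simp
    qed simp
  qed
  moreover have "g \<noteq> 0" using g3 by auto
  hence "card {(g,g),(g,-2 * g),(-2 * g,g)} = 3" by simp
  ultimately show ?thesis unfolding sv_def[symmetric] by simp
qed

lemma real_prod_mset: "(\<Prod>p\<in>#M. real p) = real (prod_mset M)"
  by (induction M) auto

theorem theorem3:
  fixes \<Phi>1 \<Phi>2 :: "real^2" and L :: real
  assumes "norm \<Phi>1 = 1" and "norm \<Phi>2 = 1" and "\<Phi>1 \<bullet> \<Phi>2 = 1/2"
    and "L > 0"
  shows "card {v \<in> lattice_E1 \<Phi>1 \<Phi>2. sqrt (normN v) = L} = 3 \<longleftrightarrow>
         (\<exists>M :: nat multiset. (\<forall>p \<in># M. prime p \<and> p mod 3 = 2) \<and>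
             L = (\<Prod>p\<in>#M. real p) / sqrt 3)"
proof
  let ?S = "{v \<in> lattice_E1 \<Phi>1 \<Phi>2. sqrt (normN v) = L}"
  assume c3: "card ?S = 3"
  hence "?S \<noteq> {}" by (metis card.empty zero_neq_numeral)
  then obtain v where v: "v \<in> lattice_E1 \<Phi>1 \<Phi>2" "sqrt (normN v) = L" by blast
  from v(1) obtain a b where ab: "v = vecE \<Phi>1 \<Phi>2 a b" "a mod 3 = 2" "b mod 3 = 2"
    unfolding lattice_vecE by blast
  define K where "K = QF a b"
  have "normN v \<ge> 0" unfolding normN_def by simp
  hence "normN v = L^2" using v(2) by (metis real_sqrt_pow2)
  hence K9: "9 * L^2 = real_of_int K"
    using normN_vecE[OF assms(1-3), of a b] ab(1) unfolding K_def by simp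
  have cT: "card (TS K) = 3" using card_S[OF assms K9] c3 by simp
  have abT: "(a,b) \<in> TS K" using ab unfolding TS_def K_def by simp
  have "\<not> (a \<noteq> b \<and> a \<noteq> -2*b \<and> b \<noteq> -2*a)" using four[OF abT] cT by blast
  from on_line[OF abT this] obtain t where t: "t mod 3 = 2" "K = 3 * t^2" by blast
  have t0: "t \<noteq> 0" using t by auto
  define M where "M = prime_factorization (nat \<bar>t\<bar>)"
  have Mp: "\<forall>p\<in>#M. prime p \<and> p mod 3 = 2"
  proof
    fix p assume pM: "p \<in># M"
    have pp: "prime p" using pM in_prime_factors_imp_prime unfolding M_def by blast
    have "p dvd nat \<bar>t\<bar>" using pM in_prime_factors_imp_dvd unfolding M_def by blast
    hence "int p dvd int (nat \<bar>t\<bar>)" by (simp only: of_nat_dvd_iff)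
    moreover have "int (nat \<bar>t\<bar>) = \<bar>t\<bar>" by simp
    ultimately have "int p dvd \<bar>t\<bar>" by metis
    hence pt: "int p dvd t" by (simp only: dvd_abs_iff)
    have "p mod 3 \<noteq> 0"
    proof
      assume "p mod 3 = 0"
      hence "int 3 dvd int p" by (simp only: of_nat_dvd_iff) presburger
      hence "3 dvd t" using pt by (metis dvd_trans of_nat_numeral)
      thus False using t(1) by presburger
    qed
    moreover have "p mod 3 \<noteq> 1"
    proof
      assume "p mod 3 = 1"
      from off_exists[OF pp this pt t(1)] obtain a' b' where
        "(a',b') \<in> TS (3 * t^2)" "a' \<noteq> b'" "a' \<noteq> -2*b'" "b' \<noteq> -2*a'" by blast
      from four[OF this] show False using cT t(2) by simp
    qed
    ultimately have "p mod 3 = 2" by presburger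
    thus "prime p \<and> p mod 3 = 2" using pp by simp
  qed
  have "prod_mset M = nat \<bar>t\<bar>" unfolding M_def using t0 by (simp add: prod_mset_prime_factorization_nat)
  hence pr: "(\<Prod>p\<in>#M. real p) = \<bar>real_of_int t\<bar>" unfolding real_prod_mset by simp
  have "L^2 = (\<bar>real_of_int t\<bar> / sqrt 3)^2"
    using K9 t(2) by (simp add: power_divide power2_abs)
  moreover have "\<bar>real_of_int t\<bar> / sqrt 3 \<ge> 0" by simp
  ultimately have "L = \<bar>real_of_int t\<bar> / sqrt 3" using assms(4)
    by (metis less_le power2_eq_iff_nonneg)
  thus "\<exists>M :: nat multiset. (\<forall>p \<in># M. prime p \<and> p mod 3 = 2) \<and>
             L = (\<Prod>p\<in>#M. real p) / sqrt 3" using Mp pr by metis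
next
  assume "\<exists>M :: nat multiset. (\<forall>p \<in># M. prime p \<and> p mod 3 = 2) \<and>
             L = (\<Prod>p\<in>#M. real p) / sqrt 3"
  then obtain M :: "nat multiset" where M: "\<forall>p \<in># M. prime p \<and> p mod 3 = 2"
    "L = (\<Prod>p\<in>#M. real p) / sqrt 3" by blast
  have L: "L = real (prod_mset M) / sqrt 3" using M(2) real_prod_mset by simp
  have "9 * L^2 = real_of_int (3 * (int (prod_mset M))^2)"
    unfolding L by (simp add: power_divide)
  from card_S[OF assms this] three[OF M(1)]
  show "card {v \<in> lattice_E1 \<Phi>1 \<Phi>2. sqrt (normN v) = L} = 3" by simp
qed

end
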